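(* Let $s\in(0,1)$, $N>2s$, $2_s^*=\frac{2N}{N-2s}$, and $\Omega\subset\mathbb{R}^N$ a smooth bounded domain. On $D_0^{s,2}(\Omega)$ let $\|u\|^2=\int_{\mathbb{R}^{2N}}\frac{|u(x)-u(y)|^2}{|x-y|^{N+2s}}dxdy+|u|_2^2$. For $p\in(2,2_s^*]$ let $I_p(u)=\frac12\|u\|^2-\frac1p|u|_p^p$, $\mathcal N_p=\{u\in D_0^{s,2}(\Omega)\setminus\{0\}:\|u\|^2=|u|_p^p\}$ and $m_p=\inf_{\mathcal N_p}I_p$ for $p<2_s^*$; let $m_*=\inf_{\mathcal N_{2_s^*}}I_{2_s^*}$. Then $$\limsup_{p\to 2_s^*}m_p\le m_*.$$
   Context: $D_0^{s,2}(\Omega)$ is the space of functions $u\in L^{2_s^*}(\mathbb{R}^N)$ with finite Gagliardo seminorm and $u\equiv0$ outside $\Omega$; $|\cdot|_q$ is the $L^q(\Omega)$ norm. *)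

theory Defs
  imports "HOL-Analysis.Analysis"
begin

fun Ck_fun :: "nat \<Rightarrow> ('a::euclidean_space \<Rightarrow> real) \<Rightarrow> bool" where
  "Ck_fun 0 f = continuous_on UNIV f"
| "Ck_fun (Suc k) f = (continuous_on UNIV f \<and> f differentiable_on UNIV \<and>
      (\<forall>i\<in>Basis. Ck_fun k (\<lambda>x. frechet_derivative f (at x) i)))"

definition smooth_fun :: "('a::euclidean_space \<Rightarrow> real) \<Rightarrow> bool" where
  "smooth_fun f \<longleftrightarrow> (\<forall>k. Ck_fun k f)"

definition smooth_bounded_domain :: "'a::euclidean_space set \<Rightarrow> bool" where
  "smooth_bounded_domain \<Omega> \<longleftrightarrow> open \<Omega> \<and> connected \<Omega> \<and> \<Omega> \<noteq> {} \<and> bounded \<Omega> \<and>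
     (\<forall>x0\<in>frontier \<Omega>. \<exists>r>0. \<exists>\<phi>. smooth_fun \<phi> \<and>
        (\<forall>x\<in>ball x0 r. frechet_derivative \<phi> (at x) \<noteq> (\<lambda>_. 0)) \<and>
        \<Omega> \<inter> ball x0 r = {x\<in>ball x0 r. \<phi> x < 0})"

definition crit_exp :: "nat \<Rightarrow> real \<Rightarrow> real" where
  "crit_exp N s = 2 * real N / (real N - 2 * s)"

definition gagliardo_integrand :: "real \<Rightarrow> ('a::euclidean_space \<Rightarrow> real) \<Rightarrow> 'a \<times> 'a \<Rightarrow> real" where
  "gagliardo_integrand s u = (\<lambda>(x,y). (u x - u y)\<^sup>2 / norm (x - y) powr (real DIM('a) + 2 * s))"

definition D0s2 :: "real \<Rightarrow> 'a::euclidean_space set \<Rightarrow> ('a \<Rightarrow> real) set" where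
  "D0s2 s \<Omega> = {u. u \<in> borel_measurable lborel \<and>
      integrable lborel (\<lambda>x. \<bar>u x\<bar> powr crit_exp DIM('a) s) \<and>
      integrable (lborel \<Otimes>\<^sub>M lborel) (gagliardo_integrand s u) \<and>
      (\<forall>x. x \<notin> \<Omega> \<longrightarrow> u x = 0)}"

definition Lq_pow :: "real \<Rightarrow> 'a::euclidean_space set \<Rightarrow> ('a \<Rightarrow> real) \<Rightarrow> real" where
  "Lq_pow q \<Omega> u = (LINT x:\<Omega>|lborel. \<bar>u x\<bar> powr q)"

definition normsq :: "real \<Rightarrow> 'a::euclidean_space set \<Rightarrow> ('a \<Rightarrow> real) \<Rightarrow> real" where
  "normsq s \<Omega> u = integral\<^sup>L (lborel \<Otimes>\<^sub>M lborel) (gagliardo_integrand s u) + Lq_pow 2 \<Omega> u"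

definition I_func :: "real \<Rightarrow> real \<Rightarrow> 'a::euclidean_space set \<Rightarrow> ('a \<Rightarrow> real) \<Rightarrow> real" where
  "I_func s p \<Omega> u = normsq s \<Omega> u / 2 - Lq_pow p \<Omega> u / p"

text \<open>Nehari manifold; u \<noteq> 0 means u is not the zero element of the function space,
  i.e. not a.e. zero.\<close>
definition Nehari :: "real \<Rightarrow> real \<Rightarrow> 'a::euclidean_space set \<Rightarrow> ('a \<Rightarrow> real) set" where
  "Nehari s p \<Omega> = {u \<in> D0s2 s \<Omega>. \<not> (AE x in lborel. u x = 0) \<and>
      normsq s \<Omega> u = Lq_pow p \<Omega> u}"

definition m_level :: "real \<Rightarrow> real \<Rightarrow> 'a::euclidean_space set \<Rightarrow> ereal" where
  "m_level s p \<Omega> = (INF u\<in>Nehari s p \<Omega>. ereal (I_func s p \<Omega> u))"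

end

theory Submission
  imports Defs
begin

lemma Lq_pow_scale:
  assumes "t > 0"
  shows "Lq_pow q \<Omega> (\<lambda>x. t * u x) = t powr q * Lq_pow q \<Omega> u"
proof -
  have "\<And>x. \<bar>t * u x\<bar> powr q = t powr q * \<bar>u x\<bar> powr q"
    using assms by (simp add: abs_mult powr_mult)
  then show ?thesis unfolding Lq_pow_def by simp
qed

lemma gag_scale:
  "gagliardo_integrand s (\<lambda>x. t * u x) = (\<lambda>z. t^2 * gagliardo_integrand s u z)"
  unfolding gagliardo_integrand_def
  by (auto simp: power2_eq_square algebra_simps)

lemma normsq_scale:
  assumes "t > 0"
  shows "normsq s \<Omega> (\<lambda>x. t * u x) = t^2 * normsq s \<Omega> u"
  unfolding normsq_def gag_scale Lq_pow_scale[OF assms]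
  using assms by (simp add: algebra_simps powr_numeral)

lemma D0s2_scale:
  assumes "t > 0" "u \<in> D0s2 s \<Omega>"
  shows "(\<lambda>x. t * u x) \<in> D0s2 s \<Omega>"
proof -
  have m: "u \<in> borel_measurable lborel" and i1: "integrable lborel (\<lambda>x. \<bar>u x\<bar> powr crit_exp DIM('a) s)"
    and i2: "integrable (lborel \<Otimes>\<^sub>M lborel) (gagliardo_integrand s u)"
    and z: "\<forall>x. x \<notin> \<Omega> \<longrightarrow> u x = 0"
    using assms(2) unfolding D0s2_def by auto
  have e: "\<And>x. \<bar>t * u x\<bar> powr q = t powr q * \<bar>u x\<bar> powr q" for q
    using assms by (simp add: abs_mult powr_mult)
  show ?thesis unfolding D0s2_def
    using m i1 i2 z by (auto simp: e gag_scale)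
qed

lemma not_AE_scale:
  assumes "(t::real) > 0" "\<not> (AE x in lborel. u x = 0)"
  shows "\<not> (AE x in lborel. t * u x = 0)"
proof
  assume "AE x in lborel. t * u x = 0"
  then have "AE x in lborel. u x = 0" using assms(1) by (auto elim!: eventually_mono)
  then show False using assms by simp
qed

lemma powr_bound:
  fixes a p c :: real
  assumes "0 < p" "p \<le> c" "0 \<le> a"
  shows "a powr p \<le> 1 + a powr c"
proof (cases "a \<le> 1")
  case True
  have "a powr p \<le> 1"
    by (metis True assms(1,3) order_less_le powr_mono2 powr_one_eq_one)
  then show ?thesis by (smt (verit) powr_ge_zero)
next
  case False
  then have "a powr p \<le> a powr c" using assms by (intro powr_mono) auto
  then show ?thesis by simp
qed

lemma Lq_pow_eq:
  assumes "\<forall>x. x \<notin> \<Omega> \<longrightarrow> u x = 0" "p > 0"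
  shows "Lq_pow p \<Omega> u = integral\<^sup>L lborel (\<lambda>x. \<bar>u x\<bar> powr p)"
proof -
  have e: "(\<lambda>x. indicator \<Omega> x *\<^sub>R \<bar>u x\<bar> powr p) = (\<lambda>x. \<bar>u x\<bar> powr p)"
  proof (rule ext)
    fix x show "indicator \<Omega> x *\<^sub>R \<bar>u x\<bar> powr p = \<bar>u x\<bar> powr p"
      using assms by (cases "x \<in> \<Omega>") auto
  qed
  show ?thesis unfolding Lq_pow_def set_lebesgue_integral_def e ..
qed

lemma Lq_conv:
  fixes u :: "'a::euclidean_space \<Rightarrow> real"
  assumes u: "u \<in> D0s2 s \<Omega>" and b: "bounded \<Omega>" and o: "open \<Omega>"
    and c: "c = crit_exp DIM('a) s" "c > 0"
  shows "((\<lambda>p. Lq_pow p \<Omega> u) \<longlongrightarrow> Lq_pow c \<Omega> u) (at_left c)"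
proof -
  have m[measurable]: "u \<in> borel_measurable lborel" and i1: "integrable lborel (\<lambda>x. \<bar>u x\<bar> powr c)"
    and z: "\<forall>x. x \<notin> \<Omega> \<longrightarrow> u x = 0"
    using u c unfolding D0s2_def by auto
  have Om[measurable]: "\<Omega> \<in> sets lborel" using o by simp
  have fin: "emeasure lborel \<Omega> < \<infinity>" using b by (rule emeasure_bounded_finite)
  have w: "integrable lborel (\<lambda>x. indicator \<Omega> x + \<bar>u x\<bar> powr c)"
    using Om fin i1 by (intro Bochner_Integration.integrable_add) auto
  show ?thesis
  proof (rule tendsto_at_left_sequentially[of 0])
    show "0 < c" by fact
    fix S :: "nat \<Rightarrow> real"
    assume S0: "\<And>n. S n < c" "\<And>n. 0 < S n" and "incseq S" and Sl: "S \<longlonglongrightarrow> c"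
    have eq: "Lq_pow (S n) \<Omega> u = integral\<^sup>L lborel (\<lambda>x. \<bar>u x\<bar> powr S n)" for n
      using Lq_pow_eq[OF z S0(2)] .
    have eqc: "Lq_pow c \<Omega> u = integral\<^sup>L lborel (\<lambda>x. \<bar>u x\<bar> powr c)"
      using Lq_pow_eq[OF z c(2)] .
    show "(\<lambda>n. Lq_pow (S n) \<Omega> u) \<longlonglongrightarrow> Lq_pow c \<Omega> u"
      unfolding eq eqc
    proof (rule integral_dominated_convergence[OF _ _ w])
      show "(\<lambda>x. \<bar>u x\<bar> powr c) \<in> borel_measurable lborel" by measurable
      show "(\<lambda>x. \<bar>u x\<bar> powr S n) \<in> borel_measurable lborel" for n by measurable
      show "AE x in lborel. (\<lambda>n. \<bar>u x\<bar> powr S n) \<longlonglongrightarrow> \<bar>u x\<bar> powr c"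
      proof (rule AE_I2)
        fix x
        show "(\<lambda>n. \<bar>u x\<bar> powr S n) \<longlonglongrightarrow> \<bar>u x\<bar> powr c"
        proof (cases "u x = 0")
          case True then show ?thesis by simp
        next
          case False then show ?thesis by (intro tendsto_intros Sl) auto
        qed
      qed
      show "AE x in lborel. norm (\<bar>u x\<bar> powr S n) \<le> indicator \<Omega> x + \<bar>u x\<bar> powr c" for n
      proof (rule AE_I2)
        fix x
        show "norm (\<bar>u x\<bar> powr S n) \<le> indicator \<Omega> x + \<bar>u x\<bar> powr c"
        proof (cases "x \<in> \<Omega>")
          case True then show ?thesis
            using powr_bound[of "S n" c "\<bar>u x\<bar>"] S0[of n] by simp
        next
          case False then show ?thesis using z by simp
        qed
      qed
    qed
  qed
qed

lemma Lq_pos: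
  fixes u :: "'a::euclidean_space \<Rightarrow> real"
  assumes u: "u \<in> D0s2 s \<Omega>" and nz: "\<not> (AE x in lborel. u x = 0)"
    and c: "c = crit_exp DIM('a) s" "c > 0"
  shows "Lq_pow c \<Omega> u > 0"
proof -
  have m[measurable]: "u \<in> borel_measurable lborel" and i1: "integrable lborel (\<lambda>x. \<bar>u x\<bar> powr c)"
    and z: "\<forall>x. x \<notin> \<Omega> \<longrightarrow> u x = 0"
    using u c unfolding D0s2_def by auto
  have eqc: "Lq_pow c \<Omega> u = integral\<^sup>L lborel (\<lambda>x. \<bar>u x\<bar> powr c)"
    using Lq_pow_eq[OF z c(2)] .
  have ge: "integral\<^sup>L lborel (\<lambda>x. \<bar>u x\<bar> powr c) \<ge> 0" by (intro Bochner_Integration.integral_nonneg) auto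
  have "integral\<^sup>L lborel (\<lambda>x. \<bar>u x\<bar> powr c) \<noteq> 0"
  proof
    assume "integral\<^sup>L lborel (\<lambda>x. \<bar>u x\<bar> powr c) = 0"
    then have "AE x in lborel. \<bar>u x\<bar> powr c = 0"
      using integral_nonneg_eq_0_iff_AE[OF i1] by auto
    then have "AE x in lborel. u x = 0" by (auto elim!: eventually_mono)
    then show False using nz by simp
  qed
  then show ?thesis using ge eqc by linarith
qed
theorem lemma3p2:
  fixes s :: real and \<Omega> :: "'a::euclidean_space set"
  assumes "0 < s" "s < 1" "real DIM('a) > 2 * s"
    and "smooth_bounded_domain \<Omega>"
  shows "Limsup (at_left (crit_exp DIM('a) s)) (\<lambda>p. m_level s p \<Omega>)
           \<le> m_level s (crit_exp DIM('a) s) \<Omega>"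
proof -
  define c where "c = crit_exp DIM('a) s"
  have c2: "c > 2" unfolding c_def crit_exp_def using assms(1,3)
    by (simp add: field_simps)
  have ob: "open \<Omega>" "bounded \<Omega>" using assms(4) unfolding smooth_bounded_domain_def by auto
  have key: "Limsup (at_left c) (\<lambda>p. m_level s p \<Omega>) \<le> ereal (I_func s c \<Omega> u)"
    if uN: "u \<in> Nehari s c \<Omega>" for u
  proof -
    have uD: "u \<in> D0s2 s \<Omega>" and nz: "\<not> (AE x in lborel. u x = 0)"
      and ne: "normsq s \<Omega> u = Lq_pow c \<Omega> u"
      using uN unfolding Nehari_def by auto
    define A where "A = normsq s \<Omega> u"
    define L where "L p = Lq_pow p \<Omega> u" for p
    have Lc: "L c > 0" unfolding L_def using Lq_pos[OF uD nz c_def] c2 by simp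
    have AL: "A = L c" unfolding A_def L_def using ne .
    have Apos: "A > 0" using Lc AL by simp
    have Lconv: "(L \<longlongrightarrow> L c) (at_left c)" unfolding L_def
      using Lq_conv[OF uD ob(2) ob(1) c_def] c2 by simp
    define g where "g p = (A / L p) powr (2 / (p - 2)) * A * (1/2 - 1/p)" for p
    have ev: "eventually (\<lambda>p. p \<in> {2<..<c} \<and> L p > 0) (at_left c)"
      using eventually_at_left_real[OF c2] order_tendstoD(1)[OF Lconv Lc]
      by (rule eventually_conj)
    have bnd: "eventually (\<lambda>p. m_level s p \<Omega> \<le> ereal (g p)) (at_left c)"
      using ev
    proof eventually_elim
      case (elim p)
      then have p2: "p > 2" and Lp: "L p > 0" by auto
      define t where "t = (A / L p) powr (1 / (p - 2))"
      have tpos: "t > 0" unfolding t_def using Apos Lp by simp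
      have tpm: "t powr (p - 2) = A / L p"
        unfolding t_def using p2 Apos Lp by (simp add: powr_powr)
      have t2: "t^2 = (A / L p) powr (2 / (p - 2))"
      proof -
        have "t^2 = t powr 2" using tpos by (simp add: powr_numeral)
        also have "\<dots> = (A / L p) powr (2 / (p - 2))"
          unfolding t_def using Apos Lp by (simp add: powr_powr)
        finally show ?thesis .
      qed
      have tp: "t powr p = t^2 * (A / L p)"
      proof -
        have "t powr p = t powr 2 * t powr (p - 2)" by (simp add: powr_add[symmetric])
        then show ?thesis using tpm tpos by (simp add: powr_numeral)
      qed
      define v where "v = (\<lambda>x. t * u x)"
      have nv: "normsq s \<Omega> v = t^2 * A" unfolding v_def A_def using normsq_scale[OF tpos] .
      have lv: "Lq_pow p \<Omega> v = t^2 * A" unfolding v_def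
        using Lq_pow_scale[OF tpos, of p \<Omega> u] tp Lp unfolding L_def by simp
      have vN: "v \<in> Nehari s p \<Omega>" unfolding Nehari_def v_def
        using D0s2_scale[OF tpos uD] not_AE_scale[OF tpos nz] nv lv unfolding v_def by simp
      have "m_level s p \<Omega> \<le> ereal (I_func s p \<Omega> v)"
        unfolding m_level_def using vN by (rule INF_lower)
      also have "I_func s p \<Omega> v = g p"
        unfolding I_func_def nv lv g_def t2[symmetric] by (simp add: algebra_simps)
      finally show ?case .
    qed
    have gl: "(g \<longlongrightarrow> (A / L c) powr (2 / (c - 2)) * A * (1/2 - 1/c)) (at_left c)"
      unfolding g_def using Lc c2
      by (intro tendsto_intros Lconv) (auto intro: tendsto_ident_at simp: AL)
    have gv: "(A / L c) powr (2 / (c - 2)) * A * (1/2 - 1/c) = I_func s c \<Omega> u"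
      unfolding I_func_def AL[symmetric] A_def[symmetric] using Lc AL
      by (simp add: algebra_simps L_def[symmetric])
    have "Limsup (at_left c) (\<lambda>p. m_level s p \<Omega>) \<le> Limsup (at_left c) (\<lambda>p. ereal (g p))"
      using bnd by (rule Limsup_mono)
    also have "\<dots> = ereal (I_func s c \<Omega> u)"
      using gl gv by (intro lim_imp_Limsup) (auto intro: tendsto_ereal)
    finally show ?thesis .
  qed
  have "Limsup (at_left c) (\<lambda>p. m_level s p \<Omega>) \<le> m_level s c \<Omega>"
    unfolding m_level_def[of s c \<Omega>] using key by (rule INF_greatest)
  then show ?thesis unfolding c_def .
qed

end
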